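(* Let $G$ be a locally Hausdorff, locally compact groupoid and $X$ a locally Hausdorff, locally compact proper (left) $G$-space, with orbit map $q:X\to G\backslash X$. Then $G\backslash X$ is locally Hausdorff and locally compact. More precisely, if $C$ is a compact subset of $X$ that has a compact Hausdorff neighborhood $K$, then $q(C)$ is Hausdorff in $G\backslash X$.
   Context: A locally Hausdorff, locally compact groupoid: groupoid operations continuous, $G^{(0)}$ Hausdorff, each point has a compact Hausdorff neighborhood, range map open. A locally Hausdorff, locally compact space: every point has a compact Hausdorff neighborhood (compact means finite-subcover property only). For a left $G$-action on $X$ with anchor $r:X\to G^{(0)}$, let $G*X=\{(\gamma,x):s(\gamma)=r(x)\}$ and $\Theta(\gamma,x)=(\gamma\cdot x,x)$; $X$ is proper if $\Theta$ is a proper map (equivalently, $\Theta^{-1}(W)$ is compact for every compact $W\subset X\times X$). $G\backslash X$ is the orbit space with the quotient topology. *)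

theory Defs
  imports "HOL-Analysis.Analysis"
begin

definition loc_haus_loc_compact :: "'a topology \<Rightarrow> bool" where
  "loc_haus_loc_compact T \<longleftrightarrow>
     (\<forall>x\<in>topspace T. \<exists>U K. openin T U \<and> x \<in> U \<and> U \<subseteq> K \<and> compactin T K
                              \<and> Hausdorff_space (subtopology T K))"

definition groupoid ::
  "'g set \<Rightarrow> ('g \<Rightarrow> 'g) \<Rightarrow> ('g \<Rightarrow> 'g) \<Rightarrow> ('g \<Rightarrow> 'g \<Rightarrow> 'g) \<Rightarrow> ('g \<Rightarrow> 'g) \<Rightarrow> bool" where
  "groupoid Garr s r m i \<longleftrightarrow>
     (\<forall>g\<in>Garr. s g \<in> Garr \<and> r g \<in> Garr \<and> i g \<in> Garr) \<and>
     (\<forall>g\<in>Garr. r (r g) = r g \<and> s (r g) = r g \<and> r (s g) = s g \<and> s (s g) = s g) \<and>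
     (\<forall>g\<in>Garr. \<forall>h\<in>Garr. s g = r h \<longrightarrow>
         m g h \<in> Garr \<and> s (m g h) = s h \<and> r (m g h) = r g) \<and>
     (\<forall>g\<in>Garr. \<forall>h\<in>Garr. \<forall>k\<in>Garr. s g = r h \<longrightarrow> s h = r k \<longrightarrow>
         m (m g h) k = m g (m h k)) \<and>
     (\<forall>g\<in>Garr. m (r g) g = g \<and> m g (s g) = g) \<and>
     (\<forall>g\<in>Garr. s (i g) = r g \<and> r (i g) = s g \<and> m g (i g) = r g \<and> m (i g) g = s g)"

definition units :: "'g set \<Rightarrow> ('g \<Rightarrow> 'g) \<Rightarrow> 'g set" where
  "units Garr r = r ` Garr"

definition composable :: "'g set \<Rightarrow> ('g \<Rightarrow> 'g) \<Rightarrow> ('g \<Rightarrow> 'g) \<Rightarrow> ('g \<times> 'g) set" where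
  "composable Garr s r = {(g, h). g \<in> Garr \<and> h \<in> Garr \<and> s g = r h}"

definition lhlc_groupoid ::
  "'g topology \<Rightarrow> ('g \<Rightarrow> 'g) \<Rightarrow> ('g \<Rightarrow> 'g) \<Rightarrow> ('g \<Rightarrow> 'g \<Rightarrow> 'g) \<Rightarrow> ('g \<Rightarrow> 'g) \<Rightarrow> bool" where
  "lhlc_groupoid TG s r m i \<longleftrightarrow>
     groupoid (topspace TG) s r m i \<and>
     continuous_map (subtopology (prod_topology TG TG) (composable (topspace TG) s r)) TG
        (\<lambda>(g, h). m g h) \<and>
     continuous_map TG TG i \<and>
     Hausdorff_space (subtopology TG (units (topspace TG) r)) \<and>
     loc_haus_loc_compact TG \<and>
     open_map TG (subtopology TG (units (topspace TG) r)) r"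

definition action_domain ::
  "'g topology \<Rightarrow> ('g \<Rightarrow> 'g) \<Rightarrow> 'x topology \<Rightarrow> ('x \<Rightarrow> 'g) \<Rightarrow> ('g \<times> 'x) set" where
  "action_domain TG s TX rX = {(g, x). g \<in> topspace TG \<and> x \<in> topspace TX \<and> s g = rX x}"

definition left_G_space ::
  "'g topology \<Rightarrow> ('g \<Rightarrow> 'g) \<Rightarrow> ('g \<Rightarrow> 'g) \<Rightarrow> ('g \<Rightarrow> 'g \<Rightarrow> 'g)
   \<Rightarrow> 'x topology \<Rightarrow> ('x \<Rightarrow> 'g) \<Rightarrow> ('g \<Rightarrow> 'x \<Rightarrow> 'x) \<Rightarrow> bool" where
  "left_G_space TG s r m TX rX act \<longleftrightarrow>
     continuous_map TX (subtopology TG (units (topspace TG) r)) rX \<and>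
     continuous_map (subtopology (prod_topology TG TX) (action_domain TG s TX rX)) TX
        (\<lambda>(g, x). act g x) \<and>
     (\<forall>(g, x)\<in>action_domain TG s TX rX. act g x \<in> topspace TX \<and> rX (act g x) = r g) \<and>
     (\<forall>g\<in>topspace TG. \<forall>h\<in>topspace TG. \<forall>x\<in>topspace TX. s g = r h \<longrightarrow> s h = rX x \<longrightarrow>
         act (m g h) x = act g (act h x)) \<and>
     (\<forall>x\<in>topspace TX. act (rX x) x = x)"

definition proper_action ::
  "'g topology \<Rightarrow> ('g \<Rightarrow> 'g) \<Rightarrow> 'x topology \<Rightarrow> ('x \<Rightarrow> 'g) \<Rightarrow> ('g \<Rightarrow> 'x \<Rightarrow> 'x) \<Rightarrow> bool" where
  "proper_action TG s TX rX act \<longleftrightarrow>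
     (\<forall>W. compactin (prod_topology TX TX) W \<longrightarrow>
        compactin (subtopology (prod_topology TG TX) (action_domain TG s TX rX))
          {(g, x) \<in> action_domain TG s TX rX. (act g x, x) \<in> W})"

definition orbit_map ::
  "'g topology \<Rightarrow> ('g \<Rightarrow> 'g) \<Rightarrow> 'x topology \<Rightarrow> ('x \<Rightarrow> 'g) \<Rightarrow> ('g \<Rightarrow> 'x \<Rightarrow> 'x) \<Rightarrow> 'x \<Rightarrow> 'x set" where
  "orbit_map TG s TX rX act x = {act g x | g. g \<in> topspace TG \<and> s g = rX x}"

definition quotient_topology :: "'a topology \<Rightarrow> ('a \<Rightarrow> 'b) \<Rightarrow> 'b topology" where
  "quotient_topology T f =
     topology (\<lambda>U. U \<subseteq> f ` topspace T \<and> openin T {x \<in> topspace T. f x \<in> U})"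

lemma openin_quotient_topology:
  "openin (quotient_topology T f) U \<longleftrightarrow> U \<subseteq> f ` topspace T \<and> openin T {x \<in> topspace T. f x \<in> U}"
proof -
  have "istopology (\<lambda>U. U \<subseteq> f ` topspace T \<and> openin T {x \<in> topspace T. f x \<in> U})"
    unfolding istopology_def
  proof (rule conjI; intro allI impI)
    fix S V assume H: "S \<subseteq> f ` topspace T \<and> openin T {x \<in> topspace T. f x \<in> S}"
                      "V \<subseteq> f ` topspace T \<and> openin T {x \<in> topspace T. f x \<in> V}"
    then have "openin T ({x \<in> topspace T. f x \<in> S} \<inter> {x \<in> topspace T. f x \<in> V})" by (simp add: openin_Int)
    moreover have "{x \<in> topspace T. f x \<in> S \<inter> V} = {x \<in> topspace T. f x \<in> S} \<inter> {x \<in> topspace T. f x \<in> V}" by blast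
    ultimately have "openin T {x \<in> topspace T. f x \<in> S \<inter> V}" by simp
    moreover have "S \<inter> V \<subseteq> f ` topspace T" using H by blast
    ultimately show "S \<inter> V \<subseteq> f ` topspace T \<and> openin T {x \<in> topspace T. f x \<in> S \<inter> V}" by blast
  next
    fix K assume K: "\<forall>S\<in>K. S \<subseteq> f ` topspace T \<and> openin T {x \<in> topspace T. f x \<in> S}"
    have "openin T (\<Union>S\<in>K. {x \<in> topspace T. f x \<in> S})" using K by (intro openin_Union) auto
    moreover have "(\<Union>S\<in>K. {x \<in> topspace T. f x \<in> S}) = {x \<in> topspace T. f x \<in> \<Union>K}" by blast
    ultimately have "openin T {x \<in> topspace T. f x \<in> \<Union>K}" by simp
    moreover have "\<Union>K \<subseteq> f ` topspace T" using K by blast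
    ultimately show "\<Union>K \<subseteq> f ` topspace T \<and> openin T {x \<in> topspace T. f x \<in> \<Union>K}" using K by blast
  qed
  then show ?thesis unfolding quotient_topology_def by simp
qed

definition orbit_space ::
  "'g topology \<Rightarrow> ('g \<Rightarrow> 'g) \<Rightarrow> 'x topology \<Rightarrow> ('x \<Rightarrow> 'g) \<Rightarrow> ('g \<Rightarrow> 'x \<Rightarrow> 'x) \<Rightarrow> 'x set topology" where
  "orbit_space TG s TX rX act = quotient_topology TX (orbit_map TG s TX rX act)"

end

theory Submission
  imports Defs
begin

lemma grpD:
  assumes "groupoid G s r m i"
  shows "g\<in>G \<Longrightarrow> s g \<in> G" "g\<in>G \<Longrightarrow> r g \<in> G" "g\<in>G \<Longrightarrow> i g \<in> G"
    "g\<in>G \<Longrightarrow> r (r g) = r g" "g\<in>G \<Longrightarrow> s (r g) = r g" "g\<in>G \<Longrightarrow> r (s g) = s g"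
    "g\<in>G \<Longrightarrow> s (s g) = s g"
    "g\<in>G \<Longrightarrow> h\<in>G \<Longrightarrow> s g = r h \<Longrightarrow> m g h \<in> G"
    "g\<in>G \<Longrightarrow> h\<in>G \<Longrightarrow> s g = r h \<Longrightarrow> s (m g h) = s h"
    "g\<in>G \<Longrightarrow> h\<in>G \<Longrightarrow> s g = r h \<Longrightarrow> r (m g h) = r g"
    "g\<in>G \<Longrightarrow> m (r g) g = g" "g\<in>G \<Longrightarrow> m g (s g) = g"
    "g\<in>G \<Longrightarrow> s (i g) = r g" "g\<in>G \<Longrightarrow> r (i g) = s g"
    "g\<in>G \<Longrightarrow> m g (i g) = r g" "g\<in>G \<Longrightarrow> m (i g) g = s g"
    "g\<in>G \<Longrightarrow> h\<in>G \<Longrightarrow> k\<in>G \<Longrightarrow> s g = r h \<Longrightarrow> s h = r k \<Longrightarrow> m (m g h) k = m g (m h k)"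
  using assms unfolding groupoid_def by blast+

lemma grp_inv_inv:
  assumes grp: "groupoid G s r m i" and g: "g \<in> G"
  shows "i (i g) = g"
proof -
  note A = grpD[OF grp]
  have hG: "i g \<in> G" "i (i g) \<in> G" using A(3) g by auto
  have e1: "i (i g) = m (i (i g)) (s (i (i g)))" using A(12) hG by auto
  have e2: "s (i (i g)) = s g" using A(13,14) hG g by auto
  have e3: "s g = m (i g) g" using A(16) g by auto
  have e4: "m (i (i g)) (m (i g) g) = m (m (i (i g)) (i g)) g"
    using A(17)[OF hG(2) hG(1) g] A(13)[OF hG(1)] A(13)[OF g] by simp
  have e5: "m (i (i g)) (i g) = r g" using A(16)[OF hG(1)] A(13)[OF g] by simp
  have e6: "m (r g) g = g" using A(11) g by auto
  have "i (i g) = m (i (i g)) (m (i g) g)" using e1 e2 e3 by simp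
  also have "\<dots> = g" using e4 e5 e6 by simp
  finally show ?thesis .
qed

lemma spD:
  assumes "left_G_space TG s r m TX rX act"
  shows "g \<in> topspace TG \<Longrightarrow> x \<in> topspace TX \<Longrightarrow> s g = rX x \<Longrightarrow> act g x \<in> topspace TX"
    "g \<in> topspace TG \<Longrightarrow> x \<in> topspace TX \<Longrightarrow> s g = rX x \<Longrightarrow> rX (act g x) = r g"
    "g\<in>topspace TG \<Longrightarrow> h\<in>topspace TG \<Longrightarrow> x\<in>topspace TX \<Longrightarrow> s g = r h \<Longrightarrow> s h = rX x \<Longrightarrow>
         act (m g h) x = act g (act h x)"
    "x\<in>topspace TX \<Longrightarrow> act (rX x) x = x"
  using assms unfolding left_G_space_def action_domain_def by blast+

lemma orbit_act:
  assumes grp: "groupoid (topspace TG) s r m i"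
    and sp: "left_G_space TG s r m TX rX act"
    and x: "x \<in> topspace TX" and g: "g \<in> topspace TG" "s g = rX x"
  shows "orbit_map TG s TX rX act (act g x) = orbit_map TG s TX rX act x"
proof -
  let ?G = "topspace TG"
  note G = grpD[OF grp] and S = spD[OF sp]
  have gx: "act g x \<in> topspace TX" "rX (act g x) = r g"
    using S(1,2) g x by auto
  have ig: "i g \<in> ?G" "s (i g) = r g" "r (i g) = s g" "m (i g) g = s g" using G g by auto
  have bk: "act (i g) (act g x) = x"
  proof -
    have "act (i g) (act g x) = act (m (i g) g) x" using S(3)[OF ig(1) g(1) x] ig g by simp
    also have "\<dots> = act (rX x) x" using ig g by simp
    finally show ?thesis using S(4) x by simp
  qed
  show ?thesis
  proof
    show "orbit_map TG s TX rX act (act g x) \<subseteq> orbit_map TG s TX rX act x"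
    proof
      fix z assume "z \<in> orbit_map TG s TX rX act (act g x)"
      then obtain h where h: "h \<in> ?G" "s h = rX (act g x)" "z = act h (act g x)"
        unfolding orbit_map_def by blast
      have "z = act (m h g) x" using S(3)[OF h(1) g(1) x] h g gx by simp
      moreover have "m h g \<in> ?G" "s (m h g) = rX x" using G(8,9)[OF h(1) g(1)] h g gx by auto
      ultimately show "z \<in> orbit_map TG s TX rX act x" unfolding orbit_map_def by blast
    qed
  next
    show "orbit_map TG s TX rX act x \<subseteq> orbit_map TG s TX rX act (act g x)"
    proof
      fix z assume "z \<in> orbit_map TG s TX rX act x"
      then obtain h where h: "h \<in> ?G" "s h = rX x" "z = act h x"
        unfolding orbit_map_def by blast
      have "z = act h (act (i g) (act g x))" using bk h by simp
      also have "\<dots> = act (m h (i g)) (act g x)" using S(3)[OF h(1) ig(1) gx(1)] h ig gx g by simp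
      finally have "z = act (m h (i g)) (act g x)" .
      moreover have "m h (i g) \<in> ?G" "s (m h (i g)) = rX (act g x)"
        using G(8,9)[OF h(1) ig(1)] h ig g gx by auto
      ultimately show "z \<in> orbit_map TG s TX rX act (act g x)" unfolding orbit_map_def by blast
    qed
  qed
qed

lemma orbit_self:
  assumes grp: "groupoid (topspace TG) s r m i"
    and sp: "left_G_space TG s r m TX rX act"
    and x: "x \<in> topspace TX"
  shows "x \<in> orbit_map TG s TX rX act x"
proof -
  have c: "continuous_map TX (subtopology TG (units (topspace TG) r)) rX"
    and U: "\<forall>x\<in>topspace TX. act (rX x) x = x"
    using sp unfolding left_G_space_def by blast+
  have rx: "rX x \<in> topspace TG \<inter> units (topspace TG) r"
    using continuous_map_image_subset_topspace[OF c] x by auto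
  then obtain h where h: "h \<in> topspace TG" "rX x = r h" unfolding units_def by auto
  have "s (r h) = r h" using grpD(5)[OF grp h(1)] .
  then have "rX x \<in> topspace TG" "s (rX x) = rX x" "x = act (rX x) x" using h U x rx by auto
  then show ?thesis unfolding orbit_map_def by blast
qed

lemma topspace_quotient: "topspace (quotient_topology T f) = f ` topspace T"
proof
  show "topspace (quotient_topology T f) \<subseteq> f ` topspace T"
    using openin_quotient_topology[of T f "topspace (quotient_topology T f)"] by simp
  have "{x \<in> topspace T. f x \<in> f ` topspace T} = topspace T" by auto
  then have "openin (quotient_topology T f) (f ` topspace T)"
    unfolding openin_quotient_topology by simp
  then show "f ` topspace T \<subseteq> topspace (quotient_topology T f)" by (rule openin_subset)
qed

lemma cont_quotient: "continuous_map T (quotient_topology T f) f"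
  unfolding continuous_map topspace_quotient
  by (auto simp: openin_quotient_topology)

context
  fixes TG :: "'g topology" and s r :: "'g \<Rightarrow> 'g" and m :: "'g \<Rightarrow> 'g \<Rightarrow> 'g" and i :: "'g \<Rightarrow> 'g"
    and TX :: "'x topology" and rX :: "'x \<Rightarrow> 'g" and act :: "'g \<Rightarrow> 'x \<Rightarrow> 'x"
  assumes lg: "lhlc_groupoid TG s r m i"
    and sp: "left_G_space TG s r m TX rX act"
begin

abbreviation "q \<equiv> orbit_map TG s TX rX act"

lemma grp: "groupoid (topspace TG) s r m i" using lg unfolding lhlc_groupoid_def by blast

lemma s_open:
  assumes A: "openin TG A"
  shows "openin (subtopology TG (units (topspace TG) r)) (s ` A)"
proof -
  note G = grpD[OF grp]
  have ci: "continuous_map TG TG i" and om: "open_map TG (subtopology TG (units (topspace TG) r)) r"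
    using lg unfolding lhlc_groupoid_def by blast+
  have AG: "A \<subseteq> topspace TG" using openin_subset[OF A] .
  have eq: "i ` A = {g \<in> topspace TG. i g \<in> A}"
  proof
    show "i ` A \<subseteq> {g \<in> topspace TG. i g \<in> A}"
      using AG G(3) grp_inv_inv[OF grp] by auto
    show "{g \<in> topspace TG. i g \<in> A} \<subseteq> i ` A"
    proof
      fix g assume "g \<in> {g \<in> topspace TG. i g \<in> A}"
      then have "g \<in> topspace TG" "i g \<in> A" by auto
      then show "g \<in> i ` A" using grp_inv_inv[OF grp] by (metis image_eqI)
    qed
  qed
  have "openin TG (i ` A)" unfolding eq using openin_continuous_map_preimage[OF ci A] .
  then have "openin (subtopology TG (units (topspace TG) r)) (r ` (i ` A))"
    using om unfolding open_map_def by blast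
  moreover have "r ` (i ` A) = s ` A" using G(14) AG by (force simp: image_image)
  ultimately show ?thesis by simp
qed

lemma q_open:
  assumes U: "openin TX U"
  shows "openin (orbit_space TG s TX rX act) (q ` U)"
proof -
  let ?AD = "action_domain TG s TX rX"
  note G = grpD[OF grp] and S = spD[OF sp]
  have crX: "continuous_map TX (subtopology TG (units (topspace TG) r)) rX"
    and cact: "continuous_map (subtopology (prod_topology TG TX) ?AD) TX (\<lambda>(g, x). act g x)"
    using sp unfolding left_G_space_def by blast+
  have UX: "U \<subseteq> topspace TX" using openin_subset[OF U] .
  have "openin TX {x \<in> topspace TX. q x \<in> q ` U}"
  proof (subst openin_subopen, intro ballI)
    fix z assume z: "z \<in> {x \<in> topspace TX. q x \<in> q ` U}"
    then obtain u where u: "u \<in> U" "q z = q u" by auto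
    have "u \<in> q z" using u orbit_self[OF grp sp] UX by auto
    then obtain h where h: "h \<in> topspace TG" "s h = rX z" "u = act h z"
      unfolding orbit_map_def by blast
    define P where "P = {p \<in> topspace (subtopology (prod_topology TG TX) ?AD). (case p of (g, x) \<Rightarrow> act g x) \<in> U}"
    have "openin (subtopology (prod_topology TG TX) ?AD) P"
      unfolding P_def using openin_continuous_map_preimage[OF cact U] .
    then obtain W where W: "openin (prod_topology TG TX) W" "P = W \<inter> ?AD"
      by (metis openin_subtopology)
    have hzAD: "(h, z) \<in> ?AD" using h z unfolding action_domain_def by auto
    have "(h, z) \<in> P" unfolding P_def using hzAD h z u by auto
    then have "(h, z) \<in> W" unfolding W(2) by simp
    then obtain A B where AB: "openin TG A" "openin TX B" "h \<in> A" "z \<in> B" "A \<times> B \<subseteq> W"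
      using W(1) openin_prod_topology_alt by metis
    define N where "N = {z' \<in> topspace TX. rX z' \<in> s ` A} \<inter> B"
    have "openin TX N" unfolding N_def
      using openin_continuous_map_preimage[OF crX s_open[OF AB(1)]] AB(2) by (rule openin_Int)
    moreover have "z \<in> N"
    proof -
      have "rX z \<in> s ` A" using h(2) AB(3) by (metis image_eqI)
      then show ?thesis unfolding N_def using z AB(4) by auto
    qed
    moreover have "N \<subseteq> {x \<in> topspace TX. q x \<in> q ` U}"
    proof
      fix z' assume "z' \<in> N"
      then obtain h' where h': "h' \<in> A" "s h' = rX z'" "z' \<in> B" "z' \<in> topspace TX"
        unfolding N_def by auto
      have h'G: "h' \<in> topspace TG" using openin_subset[OF AB(1)] h' by auto
      have "(h', z') \<in> W" using AB(5) h' by auto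
      moreover have "(h', z') \<in> ?AD" using h' h'G unfolding action_domain_def by auto
      ultimately have "(h', z') \<in> P" unfolding W(2) by simp
      then have "act h' z' \<in> U" unfolding P_def by simp
      moreover have "q (act h' z') = q z'" using orbit_act[OF grp sp h'(4) h'G h'(2)] .
      ultimately show "z' \<in> {x \<in> topspace TX. q x \<in> q ` U}" using h' by (metis (mono_tags, lifting) image_eqI mem_Collect_eq)
    qed
    ultimately show "\<exists>T. openin TX T \<and> z \<in> T \<and> T \<subseteq> {x \<in> topspace TX. q x \<in> q ` U}" by blast
  qed
  moreover have "q ` U \<subseteq> q ` topspace TX" using UX by auto
  ultimately show ?thesis unfolding orbit_space_def openin_quotient_topology by blast
qed

lemma q_sep:
  assumes pr: "proper_action TG s TX rX act"
    and K: "compactin TX K" "Hausdorff_space (subtopology TX K)"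
    and V: "openin TX V" "V \<subseteq> K" and xy: "x \<in> V" "y \<in> V" "q x \<noteq> q y"
  shows "\<exists>A B. openin TX A \<and> openin TX B \<and> x \<in> A \<and> y \<in> B \<and> (\<forall>a\<in>A. \<forall>b\<in>B. q a \<noteq> q b)"
proof -
  let ?AD = "action_domain TG s TX rX"
  let ?Th = "\<lambda>(g, x). (act g x, x)"
  define P where "P = {(g, x) \<in> ?AD. (act g x, x) \<in> K \<times> K}"
  have cact: "continuous_map (subtopology (prod_topology TG TX) ?AD) TX (\<lambda>(g, x). act g x)"
    using sp unfolding left_G_space_def by blast
  have VX: "V \<subseteq> topspace TX" using openin_subset[OF V(1)] .
  have "compactin (prod_topology TX TX) (K \<times> K)" using K(1) by (simp add: compactin_Times)
  then have Pc: "compactin (subtopology (prod_topology TG TX) ?AD) P"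
    using pr unfolding proper_action_def P_def by blast
  have cTh: "continuous_map (subtopology (prod_topology TG TX) ?AD) (prod_topology TX TX) ?Th"
  proof -
    have "fst \<circ> ?Th = (\<lambda>(g, x). act g x)" by auto
    moreover have "snd \<circ> ?Th = snd" by auto
    moreover have "continuous_map (subtopology (prod_topology TG TX) ?AD) TX snd"
      by (rule continuous_map_from_subtopology[OF continuous_map_snd])
    ultimately show ?thesis using cact unfolding continuous_map_pairwise by simp
  qed
  define R where "R = ?Th ` P"
  have "compactin (prod_topology TX TX) R" unfolding R_def using image_compactin[OF Pc cTh] .
  moreover have "R \<subseteq> K \<times> K" unfolding R_def P_def by auto
  ultimately have Rc: "compactin (subtopology (prod_topology TX TX) (K \<times> K)) R"
    by (simp add: compactin_subtopology)
  have "Hausdorff_space (subtopology (prod_topology TX TX) (K \<times> K))"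
    unfolding subtopology_Times using K(2) Hausdorff_space_prod_topology by blast
  then have "closedin (subtopology (prod_topology TX TX) (K \<times> K)) R"
    using Rc compactin_imp_closedin by blast
  then obtain F where F: "closedin (prod_topology TX TX) F" "R = F \<inter> (K \<times> K)"
    by (metis closedin_subtopology)
  define Op where "Op = topspace (prod_topology TX TX) - F"
  have Oo: "openin (prod_topology TX TX) Op" unfolding Op_def using F(1) by blast
  have Rorb: "q b = q a" if "(b, a) \<in> R" for a b
  proof -
    from that obtain g a' where "(g, a') \<in> P" "(b, a) = (act g a', a')" unfolding R_def by auto
    then have "g \<in> topspace TG" "a \<in> topspace TX" "s g = rX a" "b = act g a"
      unfolding P_def action_domain_def by auto
    then show ?thesis using orbit_act[OF grp sp] by simp
  qed
  have "(y, x) \<notin> F"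
  proof
    assume "(y, x) \<in> F"
    then have "(y, x) \<in> R" using F(2) xy V(2) by auto
    then show False using Rorb xy(3) by metis
  qed
  then have "(y, x) \<in> Op \<inter> (V \<times> V)" unfolding Op_def using xy VX by auto
  moreover have "openin (prod_topology TX TX) (Op \<inter> (V \<times> V))"
    using Oo V(1) by (simp add: openin_Int openin_prod_Times_iff)
  ultimately obtain B A where BA: "openin TX B" "openin TX A" "y \<in> B" "x \<in> A" "B \<times> A \<subseteq> Op \<inter> (V \<times> V)"
    using openin_prod_topology_alt by metis
  have "\<forall>a\<in>A. \<forall>b\<in>B. q a \<noteq> q b"
  proof (intro ballI notI)
    fix a b assume ab: "a \<in> A" "b \<in> B" "q a = q b"
    have abV: "a \<in> V" "b \<in> V" using BA(5) ab by auto
    have "b \<in> q a" using ab(3) orbit_self[OF grp sp] abV VX by auto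
    then obtain g where g: "g \<in> topspace TG" "s g = rX a" "b = act g a"
      unfolding orbit_map_def by blast
    have "(g, a) \<in> P" unfolding P_def action_domain_def using g abV VX V(2) by auto
    then have "(b, a) \<in> R" unfolding R_def using g by force
    then have "(b, a) \<in> F" using F(2) by auto
    moreover have "(b, a) \<in> Op" using BA(5) ab by auto
    ultimately show False unfolding Op_def by auto
  qed
  then show ?thesis using BA by blast
qed

lemma q_haus:
  assumes pr: "proper_action TG s TX rX act"
    and K: "compactin TX K" "Hausdorff_space (subtopology TX K)"
    and V: "openin TX V" "V \<subseteq> K" "C \<subseteq> V"
  shows "Hausdorff_space (subtopology (orbit_space TG s TX rX act) (q ` C))"
  unfolding Hausdorff_space_def
proof (intro allI impI)
  fix p1 p2 assume H: "p1 \<in> topspace (subtopology (orbit_space TG s TX rX act) (q ` C)) \<and>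
      p2 \<in> topspace (subtopology (orbit_space TG s TX rX act) (q ` C)) \<and> p1 \<noteq> p2"
  then have p12: "p1 \<in> q ` C" "p2 \<in> q ` C" "p1 \<noteq> p2" by auto
  obtain x where x: "x \<in> C" "p1 = q x" using p12(1) by blast
  obtain y where y: "y \<in> C" "p2 = q y" using p12(2) by blast
  have xV: "x \<in> V" and yV: "y \<in> V" using x y V(3) by auto
  have qxy: "q x \<noteq> q y" using p12(3) x y by simp
  obtain A B where AB: "openin TX A" "openin TX B" "x \<in> A" "y \<in> B" "\<forall>a\<in>A. \<forall>b\<in>B. q a \<noteq> q b"
    using q_sep[OF pr K V(1,2) xV yV qxy] by blast
  have xy: "p1 = q x" "p2 = q y" "x \<in> C" "y \<in> C" using x y by auto
  show "\<exists>U W. openin (subtopology (orbit_space TG s TX rX act) (q ` C)) U \<and>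
      openin (subtopology (orbit_space TG s TX rX act) (q ` C)) W \<and> p1 \<in> U \<and> p2 \<in> W \<and> disjnt U W"
  proof (intro exI conjI)
    show "openin (subtopology (orbit_space TG s TX rX act) (q ` C)) (q ` A \<inter> q ` C)"
      by (rule openin_subtopology_Int[OF q_open[OF AB(1)]])
    show "openin (subtopology (orbit_space TG s TX rX act) (q ` C)) (q ` B \<inter> q ` C)"
      by (rule openin_subtopology_Int[OF q_open[OF AB(2)]])
    show "p1 \<in> q ` A \<inter> q ` C" using xy AB by auto
    show "p2 \<in> q ` B \<inter> q ` C" using xy AB by auto
    show "disjnt (q ` A \<inter> q ` C) (q ` B \<inter> q ` C)"
      unfolding disjnt_def
    proof (rule equals0I)
      fix p assume "p \<in> q ` A \<inter> q ` C \<inter> (q ` B \<inter> q ` C)"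
      then obtain a b where "a \<in> A" "b \<in> B" "p = q a" "p = q b" by blast
      then show False using AB(5) by metis
    qed
  qed
qed

end

theorem mainTheorem3:
  fixes TG :: "'g topology" and s r :: "'g \<Rightarrow> 'g" and m :: "'g \<Rightarrow> 'g \<Rightarrow> 'g" and i :: "'g \<Rightarrow> 'g"
    and TX :: "'x topology" and rX :: "'x \<Rightarrow> 'g" and act :: "'g \<Rightarrow> 'x \<Rightarrow> 'x"
  assumes "lhlc_groupoid TG s r m i"
    and "left_G_space TG s r m TX rX act"
    and "loc_haus_loc_compact TX"
    and "proper_action TG s TX rX act"
  shows "loc_haus_loc_compact (orbit_space TG s TX rX act) \<and>
         (\<forall>C K. compactin TX C \<longrightarrow> compactin TX K \<longrightarrow> Hausdorff_space (subtopology TX K) \<longrightarrow>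
             (\<exists>U. openin TX U \<and> C \<subseteq> U \<and> U \<subseteq> K) \<longrightarrow>
             Hausdorff_space (subtopology (orbit_space TG s TX rX act)
                                (orbit_map TG s TX rX act ` C)))"
proof
  note lg = assms(1) and sp = assms(2) and lx = assms(3) and pr = assms(4)
  let ?q = "orbit_map TG s TX rX act"
  show "\<forall>C K. compactin TX C \<longrightarrow> compactin TX K \<longrightarrow> Hausdorff_space (subtopology TX K) \<longrightarrow>
             (\<exists>U. openin TX U \<and> C \<subseteq> U \<and> U \<subseteq> K) \<longrightarrow>
             Hausdorff_space (subtopology (orbit_space TG s TX rX act) (?q ` C))"
  proof (intro allI impI)
    fix C K assume "compactin TX C" and K: "compactin TX K" "Hausdorff_space (subtopology TX K)"
      and "\<exists>U. openin TX U \<and> C \<subseteq> U \<and> U \<subseteq> K"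
    then obtain U where U: "openin TX U" "U \<subseteq> K" "C \<subseteq> U" by blast
    show "Hausdorff_space (subtopology (orbit_space TG s TX rX act) (?q ` C))"
      using q_haus[OF lg sp pr K U] .
  qed
  show "loc_haus_loc_compact (orbit_space TG s TX rX act)"
    unfolding loc_haus_loc_compact_def
  proof
    fix p assume "p \<in> topspace (orbit_space TG s TX rX act)"
    then obtain x where x: "x \<in> topspace TX" "p = ?q x"
      unfolding orbit_space_def topspace_quotient by blast
    obtain U K where UK: "openin TX U" "x \<in> U" "U \<subseteq> K" "compactin TX K"
        "Hausdorff_space (subtopology TX K)"
      using lx x(1) unfolding loc_haus_loc_compact_def by blast
    have csK: "compact_space (subtopology TX K)" using compact_space_subtopology[OF UK(4)] .
    have "regular_space (subtopology TX K)"
      using compact_Hausdorff_imp_regular_space[OF csK UK(5)] .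
    then have nb: "neighbourhood_base_of (closedin (subtopology TX K)) (subtopology TX K)"
      unfolding neighbourhood_base_of_closedin .
    have "openin (subtopology TX K) (U \<inter> K)" using openin_subtopology_Int[OF UK(1)] .
    moreover have "U \<inter> K = U" using UK(3) by blast
    ultimately have Uo: "openin (subtopology TX K) U" by simp
    obtain V1 L where VL: "openin (subtopology TX K) V1" "closedin (subtopology TX K) L"
        "x \<in> V1" "V1 \<subseteq> L" "L \<subseteq> U"
      using nb Uo UK(2) unfolding neighbourhood_base_of by metis
    obtain O1 where O1: "openin TX O1" "V1 = O1 \<inter> K" using VL(1) by (metis openin_subtopology)
    have "V1 = O1 \<inter> U" using O1(2) VL(4,5) UK(3) by blast
    then have V1o: "openin TX V1" using O1(1) UK(1) by (simp add: openin_Int)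
    have "compactin (subtopology TX K) L" using closedin_compact_space[OF csK VL(2)] .
    then have Lc: "compactin TX L" by (simp add: compactin_subtopology)
    show "\<exists>U K. openin (orbit_space TG s TX rX act) U \<and> p \<in> U \<and> U \<subseteq> K \<and>
        compactin (orbit_space TG s TX rX act) K \<and> Hausdorff_space (subtopology (orbit_space TG s TX rX act) K)"
    proof (intro exI conjI)
      show "openin (orbit_space TG s TX rX act) (?q ` V1)" using q_open[OF lg sp V1o] .
      show "p \<in> ?q ` V1" using x VL(3) by blast
      show "?q ` V1 \<subseteq> ?q ` L" using VL(4) by blast
      show "compactin (orbit_space TG s TX rX act) (?q ` L)"
        unfolding orbit_space_def using image_compactin[OF Lc cont_quotient] .
      show "Hausdorff_space (subtopology (orbit_space TG s TX rX act) (?q ` L))"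
        using q_haus[OF lg sp pr UK(4) UK(5) UK(1) UK(3) VL(5)] .
    qed
  qed
qed

end
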